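(* For each of the policies LG, LR and LO, let $P_0,Q_0\in\mathcal{M}(H)$ with $P_0\ll Q_0$. Then there exists a coupling of two sequences $(P_n)$ and $(Q_n)$, each satisfying the evolution equation \[ N_n=N_{n-1}+\mathbb{1}_{\{I_n=+\}}\delta_{X_n}-\mathbb{1}_{\{I_n=-,\ N_{n-1}(B(X_n,1))\neq0\}}\delta_{t_1(X_n,N_{n-1})},\quad n\ge1, \] with initial conditions $N_0=P_0$ and $N_0=Q_0$ respectively, such that $P_n\ll Q_n$ for all $n\ge0$.
   Context: $H$ is a compact metric space with distance $d$, $B(x,r)=\{y\in H:d(x,y)<r\}$. $\mathcal{M}(H)$ is the set of finite non-negative Borel measures on $H$ with values in $\mathbb{N}$ (finite point configurations, possibly with multiplicities); support points of $M$ are the $z$ with $M(\{z\})\neq0$. $M\ll P$ means $M(A)\le P(A)$ for all Borel $A$. $\delta_x$ is the Dirac mass at $x$, and $\delta_\partial$ (cemetery state) is the zero measure. $(I_n)_{n\ge1}$ is a sequence of types in $\{+,-\}$ and $(X_n)_{n\ge1}$ a sequence of locations in $H$ (random variables). Kill function, for $M\in\mathcal{M}(H)$: $t_1(x,M)=\partial$ if $M(B(x,1))=0$; otherwise for LG, $t_1(x,M)$ is a support point of $M$ in $B(x,1)$ closest to $x$ (ties broken uniformly at random); for LR, a uniformly random support point of $M$ in $B(x,1)$; for LO ($H\subset\mathbb{R}^d$), a support point $y$ of $M$ in $B(x,1)$ with $y\ge x$ coordinatewise closest to $x$ ($\partial$ if none). Removing $\delta_{t_1}$ removes one unit of mass.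 *)

theory Defs
  imports "HOL-Probability.Probability"
begin

text \<open>Finite N-valued measures (point configurations with multiplicities) are
 represented as multisets; the cemetery state \<open>\<partial>\<close> is \<open>None\<close>.\<close>

datatype sgn = Plus | Minus

definition mass :: "'a multiset \<Rightarrow> 'a set \<Rightarrow> nat" where
  "mass M A = size (filter_mset (\<lambda>y. y \<in> A) M)"

definition abs_le :: "'a::topological_space multiset \<Rightarrow> 'a multiset \<Rightarrow> bool" where
  "abs_le M P \<longleftrightarrow> (\<forall>A \<in> sets borel. mass M A \<le> mass P A)"

definition oball :: "'a::metric_space \<Rightarrow> real \<Rightarrow> 'a set" where
  "oball x r = {y. dist x y < r}"

definition cand_ball :: "'a::metric_space \<Rightarrow> 'a multiset \<Rightarrow> 'a set" where
  "cand_ball x M = {y \<in> set_mset M. y \<in> oball x 1}"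

definition closest :: "'a::metric_space \<Rightarrow> 'a set \<Rightarrow> 'a set" where
  "closest x C = {y \<in> C. \<forall>z \<in> C. dist x y \<le> dist x z}"

definition choose_unif :: "'a set \<Rightarrow> 'a option pmf" where
  "choose_unif C = (if C = {} then return_pmf None else map_pmf Some (pmf_of_set C))"

text \<open>Kill functions t_1 (as probability distributions of the killed point).\<close>
definition kill_LG :: "'a::metric_space \<Rightarrow> 'a multiset \<Rightarrow> 'a option pmf" where
  "kill_LG x M = choose_unif (closest x (cand_ball x M))"

definition kill_LR :: "'a::metric_space \<Rightarrow> 'a multiset \<Rightarrow> 'a option pmf" where
  "kill_LR x M = choose_unif (cand_ball x M)"

definition kill_LO :: "real^'d \<Rightarrow> (real^'d) multiset \<Rightarrow> (real^'d) option pmf" where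
  "kill_LO x M = choose_unif (closest x {y \<in> cand_ball x M. \<forall>k. x $ k \<le> y $ k})"

definition step :: "('a::metric_space \<Rightarrow> 'a multiset \<Rightarrow> 'a option pmf) \<Rightarrow> sgn \<Rightarrow> 'a \<Rightarrow>
    'a multiset \<Rightarrow> 'a multiset pmf" where
  "step t s x N = (case s of
      Plus \<Rightarrow> return_pmf (N + {#x#})
    | Minus \<Rightarrow> (if mass N (oball x 1) = 0 then return_pmf N
               else map_pmf (\<lambda>ko. case ko of None \<Rightarrow> N | Some y \<Rightarrow> N - {#y#}) (t x N)))"

text \<open>Law of the path (N_0,...,N_n) for input sequences i, x (I_n = i n, X_n = x n, n \<ge> 1).\<close>
primrec path_pmf :: "('a::metric_space \<Rightarrow> 'a multiset \<Rightarrow> 'a option pmf) \<Rightarrow> (nat \<Rightarrow> sgn) \<Rightarrow>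
    (nat \<Rightarrow> 'a) \<Rightarrow> 'a multiset \<Rightarrow> nat \<Rightarrow> 'a multiset list pmf" where
  "path_pmf t i x N0 0 = return_pmf [N0]"
| "path_pmf t i x N0 (Suc n) = bind_pmf (path_pmf t i x N0 n)
      (\<lambda>l. map_pmf (\<lambda>N. l @ [N]) (step t (i (Suc n)) (x (Suc n)) (last l)))"

definition coupling_exists :: "('a::metric_space \<Rightarrow> 'a multiset \<Rightarrow> 'a option pmf) \<Rightarrow>
    (nat \<Rightarrow> sgn) \<Rightarrow> (nat \<Rightarrow> 'a) \<Rightarrow> 'a multiset \<Rightarrow> 'a multiset \<Rightarrow> bool" where
  "coupling_exists t i x P0 Q0 \<longleftrightarrow>
    (\<exists>M :: (nat \<Rightarrow> 'a multiset \<times> 'a multiset) measure.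
       prob_space M \<and>
       (\<forall>n l. {\<omega> \<in> space M. map (\<lambda>k. fst (\<omega> k)) [0..<Suc n] = l} \<in> sets M \<and>
              measure M {\<omega> \<in> space M. map (\<lambda>k. fst (\<omega> k)) [0..<Suc n] = l}
                = pmf (path_pmf t i x P0 n) l) \<and>
       (\<forall>n l. {\<omega> \<in> space M. map (\<lambda>k. snd (\<omega> k)) [0..<Suc n] = l} \<in> sets M \<and>
              measure M {\<omega> \<in> space M. map (\<lambda>k. snd (\<omega> k)) [0..<Suc n] = l}
                = pmf (path_pmf t i x Q0 n) l) \<and>
       (AE \<omega> in M. \<forall>n. abs_le (fst (\<omega> n)) (snd (\<omega> n))))"

end

theory Submission
  imports Defs
begin


lemma bind_unif_nested:
  assumes fB: "finite B" and AB: "A \<subseteq> B" and Ane: "A \<noteq> {}"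
  shows "bind_pmf (pmf_of_set B) (\<lambda>y. if y \<in> A then return_pmf y else pmf_of_set A) = pmf_of_set A"
proof (rule pmf_eqI)
  fix w
  have fA: "finite A" using fB AB finite_subset by blast
  have Bne: "B \<noteq> {}" using AB Ane by blast
  have cA: "card A > 0" using fA Ane by (simp add: card_gt_0_iff)
  have cB: "card B = card A + card (B - A)"
    using fB AB by (metis add.commute card_Diff_subset card_mono finite_subset le_add_diff_inverse)
  have "(\<Sum>y\<in>B. pmf (if y \<in> A then return_pmf y else pmf_of_set A) w)
      = (\<Sum>y\<in>A. indicator {y} w) + (\<Sum>y\<in>B - A. indicator A w / card A)"
  proof -
    have "(\<Sum>y\<in>B. pmf (if y \<in> A then return_pmf y else pmf_of_set A) w)
       = (\<Sum>y\<in>B. if y \<in> A then indicator {y} w else indicator A w / card A)"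
      using fA Ane by (intro sum.cong) (auto simp: indicator_def)
    also have "\<dots> = (\<Sum>y\<in>B \<inter> {y. y \<in> A}. indicator {y} w) + (\<Sum>y\<in>B \<inter> - {y. y \<in> A}. indicator A w / card A)"
      using fB by (rule sum.If_cases)
    also have "B \<inter> {y. y \<in> A} = A" using AB by auto
    also have "B \<inter> - {y. y \<in> A} = B - A" by auto
    finally show ?thesis .
  qed
  also have "\<dots> = (indicator A w :: real) * real (card B) / real (card A)"
  proof (cases "w \<in> A")
    case True
    have "(\<Sum>y\<in>A. indicator {y} w :: real) = 1"
      using fA True by (simp add: indicator_def)
    then show ?thesis using True cA cB by (simp add: field_simps)
  next
    case False
    then have "(\<Sum>y\<in>A. indicator {y} w :: real) = 0"
      by (intro sum.neutral) (auto simp: indicator_def)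
    then show ?thesis using False by simp
  qed
  finally show "pmf (bind_pmf (pmf_of_set B) (\<lambda>y. if y \<in> A then return_pmf y else pmf_of_set A)) w = pmf (pmf_of_set A) w"
    using fB Bne fA Ane cA by (simp add: pmf_bind_pmf_of_set)
qed

definition upd :: "'b multiset \<Rightarrow> 'b option \<Rightarrow> 'b multiset" where
  "upd N ko = (case ko of None \<Rightarrow> N | Some y \<Rightarrow> N - {#y#})"

definition couple :: "'b set \<Rightarrow> 'b set \<Rightarrow> ('b option \<times> 'b option) pmf" where
  "couple A B = (if A \<noteq> {} \<and> A \<subseteq> B then
     bind_pmf (pmf_of_set B) (\<lambda>y. if y \<in> A then return_pmf (Some y, Some y)
                                    else map_pmf (\<lambda>z. (Some z, Some y)) (pmf_of_set A))
     else pair_pmf (choose_unif A) (choose_unif B))"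

lemma set_choose_unif: "finite C \<Longrightarrow> set_pmf (choose_unif C) = (if C = {} then {None} else Some ` C)"
  by (simp add: choose_unif_def)

lemma couple_fst:
  assumes "finite A" "finite B"
  shows "map_pmf fst (couple A B) = choose_unif A"
proof (cases "A \<noteq> {} \<and> A \<subseteq> B")
  case True
  then have "map_pmf fst (couple A B) = bind_pmf (pmf_of_set B)
        (\<lambda>y. map_pmf Some (if y \<in> A then return_pmf y else pmf_of_set A))"
    by (simp add: couple_def map_bind_pmf map_pmf_comp if_distrib cong: if_cong)
  also have "\<dots> = map_pmf Some (bind_pmf (pmf_of_set B) (\<lambda>y. if y \<in> A then return_pmf y else pmf_of_set A))"
    by (simp add: map_bind_pmf)
  also have "\<dots> = map_pmf Some (pmf_of_set A)"
    using True assms by (simp add: bind_unif_nested)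
  finally show ?thesis using True by (simp add: choose_unif_def)
next
  case False then show ?thesis unfolding couple_def if_not_P[OF False] by (simp add: map_fst_pair_pmf)
qed

lemma couple_snd:
  assumes "finite A" "finite B"
  shows "map_pmf snd (couple A B) = choose_unif B"
proof (cases "A \<noteq> {} \<and> A \<subseteq> B")
  case True
  then have "map_pmf snd (couple A B) = bind_pmf (pmf_of_set B) (\<lambda>y. return_pmf (Some y))"
    by (simp add: couple_def map_bind_pmf map_pmf_comp if_distrib cong: if_cong)
  also have "\<dots> = map_pmf Some (pmf_of_set B)"
    by (simp add: map_pmf_def)
  finally show ?thesis using True by (auto simp: choose_unif_def)
next
  case False then show ?thesis unfolding couple_def if_not_P[OF False] by (simp add: map_snd_pair_pmf)
qed

lemma couple_supp:
  assumes "finite A" "finite B" "(a, b) \<in> set_pmf (couple A B)"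
  shows "(b = None \<or> (\<exists>y. b = Some y \<and> y \<in> B)) \<and>
    (a = b \<or> b = None \<or> (\<exists>y. b = Some y \<and> (y \<notin> A \<or> A = {} \<or> \<not> A \<subseteq> B)))"
proof (cases "A \<noteq> {} \<and> A \<subseteq> B")
  case True
  have fA: "finite A" by fact
  have "B \<noteq> {}" using True by blast
  with assms True fA show ?thesis
    by (auto simp: couple_def split: if_splits)
next
  case False
  with assms show ?thesis by (auto simp: couple_def set_choose_unif split: if_splits)
qed

lemma upd_sub: "upd p a \<subseteq># p"
  by (cases a) (auto simp: upd_def)

lemma upd_mono:
  assumes "p \<subseteq># q" "a = b \<or> b = None \<or> (\<exists>y. b = Some y \<and> y \<notin># p)"
  shows "upd p a \<subseteq># upd q b"
proof -
  consider "a = b" | "b = None" | y where "b = Some y" "y \<notin># p" using assms(2) by blast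
  then show ?thesis
  proof cases
    case 1 then show ?thesis using assms(1)
      by (cases b) (auto simp: upd_def subseteq_mset_def intro: diff_le_mono)
  next
    case 2 then show ?thesis using assms(1) upd_sub[of p a]
      by (auto simp: upd_def intro: subset_mset.order_trans)
  next
    case 3
    have "p \<subseteq># q - {#y#}" using assms(1) 3(2)
      by (auto simp: subseteq_mset_def not_in_iff)
    then show ?thesis using 3 upd_sub[of p a]
      by (auto simp: upd_def intro: subset_mset.order_trans)
  qed
qed

lemma mass_mono: "p \<subseteq># q \<Longrightarrow> mass p A \<le> mass q A"
  unfolding mass_def by (intro size_mset_mono multiset_filter_mono)

lemma mass_zero_cand: "mass N (oball x 1) = 0 \<Longrightarrow> cand_ball x N = {}"
  unfolding mass_def cand_ball_def by (auto simp: filter_mset_eq_conv)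

lemma finite_cand: "finite (cand_ball x N)"
  unfolding cand_ball_def by simp

lemma step_alt: "step t s x N = (case s of Plus \<Rightarrow> return_pmf (N + {#x#})
   | Minus \<Rightarrow> (if mass N (oball x 1) = 0 then return_pmf N else map_pmf (upd N) (t x N)))"
  unfolding step_def upd_def by simp

definition cstep :: "('b::metric_space \<Rightarrow> 'b multiset \<Rightarrow> 'b set) \<Rightarrow> sgn \<Rightarrow> 'b \<Rightarrow>
    'b multiset \<times> 'b multiset \<Rightarrow> ('b multiset \<times> 'b multiset) pmf" where
  "cstep cs s x pq = (case pq of (p, q) \<Rightarrow> (case s of
      Plus \<Rightarrow> return_pmf (p + {#x#}, q + {#x#})
    | Minus \<Rightarrow> (if mass q (oball x 1) = 0 then return_pmf (p, q)
               else map_pmf (\<lambda>(a, b). (upd p a, upd q b)) (couple (cs x p) (cs x q)))))"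

context
  fixes cs :: "'b::metric_space \<Rightarrow> 'b multiset \<Rightarrow> 'b set"
  assumes Q1: "\<And>x N. cs x N \<subseteq> cand_ball x N"
begin

lemma fin_cs: "finite (cs x N)"
  using Q1 finite_cand finite_subset by blast

lemma cstep_fst:
  assumes "p \<subseteq># q"
  shows "map_pmf fst (cstep cs s x (p, q)) = step (\<lambda>x N. choose_unif (cs x N)) s x p"
proof (cases s)
  case Plus then show ?thesis by (simp add: cstep_def step_alt)
next
  case Minus
  show ?thesis
  proof (cases "mass q (oball x 1) = 0")
    case True
    then have "mass p (oball x 1) = 0" using mass_mono[OF assms, of "oball x 1"] by simp
    then show ?thesis using True Minus by (simp add: cstep_def step_alt)
  next
    case False
    have "map_pmf fst (cstep cs s x (p, q)) = map_pmf (upd p) (map_pmf fst (couple (cs x p) (cs x q)))"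
      using False Minus by (simp add: cstep_def map_pmf_comp case_prod_beta)
    also have "\<dots> = map_pmf (upd p) (choose_unif (cs x p))"
      by (simp add: couple_fst fin_cs)
    finally have e: "map_pmf fst (cstep cs s x (p, q)) = map_pmf (upd p) (choose_unif (cs x p))" .
    show ?thesis
    proof (cases "mass p (oball x 1) = 0")
      case True
      then have "cs x p = {}" using Q1[of x p] mass_zero_cand[OF True] by blast
      then show ?thesis using e True Minus by (simp add: step_alt choose_unif_def upd_def)
    next
      case False2: False
      then show ?thesis using e Minus by (simp add: step_alt)
    qed
  qed
qed

lemma cstep_snd:
  assumes "p \<subseteq># q"
  shows "map_pmf snd (cstep cs s x (p, q)) = step (\<lambda>x N. choose_unif (cs x N)) s x q"
proof (cases s)
  case Plus then show ?thesis by (simp add: cstep_def step_alt)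
next
  case Minus
  show ?thesis
  proof (cases "mass q (oball x 1) = 0")
    case True
    then show ?thesis using True Minus by (simp add: cstep_def step_alt)
  next
    case False
    have "map_pmf snd (cstep cs s x (p, q)) = map_pmf (upd q) (map_pmf snd (couple (cs x p) (cs x q)))"
      using False Minus by (simp add: cstep_def map_pmf_comp case_prod_beta)
    also have "\<dots> = map_pmf (upd q) (choose_unif (cs x q))"
      by (simp add: couple_snd fin_cs)
    finally show ?thesis using False Minus by (simp add: step_alt)
  qed
qed

lemma cstep_supp:
  assumes Q2: "\<And>x p q y. p \<subseteq># q \<Longrightarrow> y \<in> cs x q \<Longrightarrow> y \<in># p \<Longrightarrow> y \<in> cs x p"
    and Q3: "\<And>x p q y. p \<subseteq># q \<Longrightarrow> \<not> cs x p \<subseteq> cs x q \<Longrightarrow> y \<in> cs x q \<Longrightarrow> y \<notin># p"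
    and pq: "p \<subseteq># q" and mem: "(p', q') \<in> set_pmf (cstep cs s x (p, q))"
  shows "p' \<subseteq># q' \<and> set_mset p' \<subseteq> insert x (set_mset p) \<and> set_mset q' \<subseteq> insert x (set_mset q)"
proof (cases s)
  case Plus then show ?thesis using pq mem by (auto simp: cstep_def)
next
  case Minus
  show ?thesis
  proof (cases "mass q (oball x 1) = 0")
    case True
    then show ?thesis using pq mem Minus by (auto simp: cstep_def)
  next
    case False
    then obtain a b where ab: "(a, b) \<in> set_pmf (couple (cs x p) (cs x q))" and
      p': "p' = upd p a" and q': "q' = upd q b"
      using mem Minus by (auto simp: cstep_def)
    note cp = couple_supp[OF fin_cs fin_cs ab]
    have "a = b \<or> b = None \<or> (\<exists>y. b = Some y \<and> y \<notin># p)"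
    proof -
      { fix y assume b: "b = Some y" and ne: "a \<noteq> b"
        then have yB: "y \<in> cs x q" and alt: "y \<notin> cs x p \<or> cs x p = {} \<or> \<not> cs x p \<subseteq> cs x q"
          using cp by auto
        have "y \<notin># p"
        proof
          assume yp: "y \<in># p"
          from alt show False
          proof (elim disjE)
            assume "y \<notin> cs x p" then show False using Q2[OF pq yB yp] by simp
          next
            assume "cs x p = {}" then show False using Q2[OF pq yB yp] by simp
          next
            assume "\<not> cs x p \<subseteq> cs x q" then show False using Q3[OF pq _ yB] yp by blast
          qed
        qed }
      then show ?thesis by (cases b) auto
    qed
    then have "p' \<subseteq># q'" using upd_mono[OF pq] p' q' by blast
    moreover have "set_mset p' \<subseteq> set_mset p" "set_mset q' \<subseteq> set_mset q"
      using p' q' upd_sub[of p a] upd_sub[of q b] by (auto dest: mset_subset_eqD)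
    ultimately show ?thesis by blast
  qed
qed

end



primrec cpathN :: "(nat \<Rightarrow> nat \<Rightarrow> nat pmf) \<Rightarrow> nat \<Rightarrow> nat \<Rightarrow> nat list pmf" where
  "cpathN K e 0 = return_pmf [e]"
| "cpathN K e (Suc n) = bind_pmf (cpathN K e n) (\<lambda>l. map_pmf (\<lambda>s. l @ [s]) (K (Suc n) (last l)))"

lemma cyl_sets:
  assumes "\<And>k c. {\<omega>\<in>space N. F k \<omega> = c} \<in> sets N"
  shows "{\<omega>\<in>space N. map (\<lambda>k. F k \<omega>) [0..<m] = l} \<in> sets N"
proof (induction m arbitrary: l)
  case 0
  show ?case by (cases l) auto
next
  case (Suc m)
  show ?case
  proof (cases "l = []")
    case True then show ?thesis by simp
  next
    case False
    have "{\<omega>\<in>space N. map (\<lambda>k. F k \<omega>) [0..<Suc m] = l} =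
      {\<omega>\<in>space N. map (\<lambda>k. F k \<omega>) [0..<m] = butlast l} \<inter> {\<omega>\<in>space N. F m \<omega> = last l}"
      using False by (auto simp: snoc_eq_iff_butlast)
    then show ?thesis using Suc assms by auto
  qed
qed

lemma g_meas:
  assumes "{0..<m} \<subseteq> J"
  shows "(\<lambda>\<omega>. map \<omega> [0..<m]) \<in> measurable (PiM J (\<lambda>_. count_space (UNIV::nat set))) (count_space UNIV)"
proof -
  have "{\<omega>\<in>space (PiM J (\<lambda>_. count_space (UNIV::nat set))). \<omega> k = c} \<in> sets (PiM J (\<lambda>_. count_space UNIV))"
    if "k < m" for k c
  proof -
    have "(\<lambda>\<omega>. \<omega> k) \<in> measurable (PiM J (\<lambda>_. count_space (UNIV::nat set))) (count_space UNIV)"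
      using assms that by (intro measurable_component_singleton) auto
    from measurable_sets[OF this, of "{c}"] show ?thesis by (simp add: vimage_def Int_def conj_commute)
  qed
  then have "{\<omega>\<in>space (PiM J (\<lambda>_. count_space (UNIV::nat set))). map (\<lambda>k. (\<lambda>j. if j < m then \<omega> j else 0) k) [0..<m] = l} \<in> sets (PiM J (\<lambda>_. count_space UNIV))" for l
    by (intro cyl_sets) (case_tac "k < m", auto)
  moreover have "map (\<lambda>k. (\<lambda>j. if j < m then \<omega> j else 0) k) [0..<m] = map \<omega> [0..<m]" for \<omega> :: "nat \<Rightarrow> nat"
    by simp
  ultimately show ?thesis
    by (subst measurable_count_space_eq2_countable) (auto simp: vimage_def Int_def conj_commute)
qed

lemma IT_chain:
  fixes K :: "nat \<Rightarrow> nat \<Rightarrow> nat pmf" and e :: nat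
  shows "\<exists>L::(nat \<Rightarrow> nat) measure. prob_space L \<and> sets L = sets (PiM UNIV (\<lambda>_. count_space UNIV))
     \<and> (\<forall>n. distr L (count_space UNIV) (\<lambda>\<omega>. map \<omega> [0..<Suc n]) = measure_pmf (cpathN K e n))"
proof -
  define M :: "nat \<Rightarrow> nat measure" where "M = (\<lambda>_. count_space UNIV)"
  define P where "P = (\<lambda>k (\<omega>::nat\<Rightarrow>nat). measure_pmf (if k = 0 then return_pmf e else K k (\<omega> (k - 1))))"
  have Pm: "P i \<in> measurable (PiM {0..<i} M) (subprob_algebra (M i))" for i
    proof (cases i)
      case 0 then show ?thesis
        by (auto simp: P_def M_def intro!: measurable_const measure_pmf_in_subprob_algebra)
    next
      case (Suc n)
      have 1: "(\<lambda>\<omega>::nat\<Rightarrow>nat. \<omega> n) \<in> measurable (PiM {0..<i} M) (M n)"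
        using Suc by (intro measurable_component_singleton) auto
      have 2: "(\<lambda>j. measure_pmf (K i j)) \<in> measurable (M n) (subprob_algebra (M i))"
        by (simp add: M_def measure_pmf_in_subprob_algebra)
      show ?thesis using measurable_compose[OF 1 2] Suc by (simp add: P_def)
    qed
  have Pp: "prob_space (P i x)" for i x
    by (simp add: P_def measure_pmf.prob_space_axioms)
  interpret IT: Ionescu_Tulcea P M
    by (rule Ionescu_Tulcea.intro) (rule Pm, rule Pp)
  define u :: "nat \<Rightarrow> nat" where "u = (\<lambda>_. undefined)"
  have u: "u \<in> space (PiM {0..<0} M)" by (simp add: u_def space_PiM_empty)
  have gm: "(\<lambda>\<omega>. map \<omega> [0..<m]) \<in> measurable (PiM J M) (count_space UNIV)" if "{0..<m} \<subseteq> J" for m J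
    using g_meas[OF that] by (simp add: M_def)
  have fum: "fun_upd \<omega> n \<in> measurable (P n \<omega>) (PiM {0..<Suc n} M)" if "\<omega> \<in> space (PiM {0..<n} M)" for \<omega> n
    using that by (auto simp: P_def M_def space_PiM PiE_iff extensional_def)
  have C_eq: "distr (IT.C 0 (Suc n) u) (count_space UNIV) (\<lambda>\<omega>. map \<omega> [0..<Suc n]) = measure_pmf (cpathN K e n)" for n
  proof (induction n)
    case 0
    have e1: "IT.C 0 (Suc 0) u = distr (P 0 u) (PiM {0..<Suc 0} M) (fun_upd u 0)"
      using bind_return[OF IT.measurable_eP u] by (simp add: IT.eP_def)
    have "distr (IT.C 0 (Suc 0) u) (count_space UNIV) (\<lambda>\<omega>. map \<omega> [0..<Suc 0])
        = distr (P 0 u) (count_space UNIV) ((\<lambda>\<omega>. map \<omega> [0..<Suc 0]) \<circ> fun_upd u 0)"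
      unfolding e1 by (rule distr_distr[OF gm fum]) (use u in simp_all)
    also have "\<dots> = distr (P 0 u) (count_space UNIV) (\<lambda>s. map (u(0:=s)) [0..<Suc 0])"
      by (simp add: comp_def)
    also have "\<dots> = measure_pmf (map_pmf (\<lambda>s. [s]) (return_pmf e))"
      by (subst map_pmf_rep_eq) (simp add: P_def)
    finally show ?case by simp
  next
    case (Suc n)
    interpret Cp: prob_space "IT.C 0 (Suc n) u" using u by (intro IT.prob_space_C) simp
    have sC: "sets (IT.C 0 (Suc n) u) = sets (PiM {0..<Suc n} M)"
      using IT.sets_C[OF u, of "Suc n"] by simp
    have ePm: "IT.eP (Suc n) \<in> measurable (IT.C 0 (Suc n) u) (subprob_algebra (PiM {0..<Suc (Suc n)} M))"
      unfolding measurable_cong_sets[OF sC refl] by (rule IT.measurable_eP)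
    have g1: "(\<lambda>\<omega>. map \<omega> [0..<Suc n]) \<in> measurable (IT.C 0 (Suc n) u) (count_space UNIV)"
      unfolding measurable_cong_sets[OF sC refl] by (rule gm) simp
    define h where "h = (\<lambda>l. measure_pmf (map_pmf (\<lambda>s. l @ [s]) (K (Suc n) (last l))))"
    have hm: "h \<in> measurable (count_space UNIV) (subprob_algebra (count_space UNIV))"
      by (simp add: h_def measure_pmf_in_subprob_algebra)
    have "IT.C 0 (Suc (Suc n)) u = IT.C 0 (Suc n) u \<bind> IT.eP (Suc n)" by simp
    then have "distr (IT.C 0 (Suc (Suc n)) u) (count_space UNIV) (\<lambda>\<omega>. map \<omega> [0..<Suc (Suc n)])
        = IT.C 0 (Suc n) u \<bind> (\<lambda>\<omega>. distr (IT.eP (Suc n) \<omega>) (count_space UNIV) (\<lambda>\<omega>. map \<omega> [0..<Suc (Suc n)]))"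
      using distr_bind[OF ePm Cp.not_empty gm[of "Suc (Suc n)" "{0..<Suc (Suc n)}"]] by simp
    also have "\<dots> = IT.C 0 (Suc n) u \<bind> (\<lambda>\<omega>. h (map \<omega> [0..<Suc n]))"
    proof (rule bind_cong[OF refl])
      fix \<omega> assume "\<omega> \<in> space (IT.C 0 (Suc n) u)"
      then have om: "\<omega> \<in> space (PiM {0..<Suc n} M)" using IT.space_C[OF u, of "Suc n"] by simp
      have "distr (IT.eP (Suc n) \<omega>) (count_space UNIV) (\<lambda>\<omega>. map \<omega> [0..<Suc (Suc n)])
         = distr (P (Suc n) \<omega>) (count_space UNIV) (\<lambda>s. map (fun_upd \<omega> (Suc n) s) [0..<Suc (Suc n)])"
        unfolding IT.eP_def
        by (subst distr_distr[OF gm fum[OF om]]) (auto simp: comp_def)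
      also have "\<dots> = distr (P (Suc n) \<omega>) (count_space UNIV) (\<lambda>s. map \<omega> [0..<Suc n] @ [s])"
        by (rule distr_cong) auto
      also have "\<dots> = h (map \<omega> [0..<Suc n])"
        by (simp add: h_def P_def map_pmf_rep_eq)
      finally show "distr (IT.eP (Suc n) \<omega>) (count_space UNIV) (\<lambda>\<omega>. map \<omega> [0..<Suc (Suc n)]) = h (map \<omega> [0..<Suc n])" .
    qed
    also have "\<dots> = distr (IT.C 0 (Suc n) u) (count_space UNIV) (\<lambda>\<omega>. map \<omega> [0..<Suc n]) \<bind> h"
      by (rule bind_distr[OF g1 hm Cp.not_empty, symmetric])
    also have "\<dots> = measure_pmf (cpathN K e (Suc n))"
      by (simp only: Suc.IH) (simp add: measure_pmf_bind h_def)
    finally show ?case .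
  qed
  have up: "IT.up_to {0..<m} = m" for m
  proof (rule antisym)
    show "IT.up_to {0..<m} \<le> m" by (simp add: IT.up_to_iff_Ico)
    show "m \<le> IT.up_to {0..<m}"
      using IT.up_to_less[of "{0..<m}" "m - 1"] by (cases m) auto
  qed
  have sL: "sets IT.PF.lim = sets (PiM UNIV M)" by simp
  have gL: "(\<lambda>\<omega>. map \<omega> [0..<m]) \<in> measurable IT.PF.lim (count_space UNIV)" for m
    unfolding measurable_cong_sets[OF sL refl] by (rule gm) simp
  have rL: "(\<lambda>x. restrict x J) \<in> measurable IT.PF.lim (PiM J M)" for J
    unfolding measurable_cong_sets[OF sL refl] by (rule measurable_restrict_subset) simp
  have rC: "(\<lambda>x. restrict x {0..<m}) \<in> measurable (IT.C 0 m u) (PiM {0..<m} M)" for m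
    unfolding measurable_cong_sets[OF IT.sets_C[OF u] refl] by (rule measurable_restrict_subset) simp
  have L_eq: "distr IT.PF.lim (count_space UNIV) (\<lambda>\<omega>. map \<omega> [0..<Suc n]) = measure_pmf (cpathN K e n)" for n
  proof -
    have "distr IT.PF.lim (count_space UNIV) (\<lambda>\<omega>. map \<omega> [0..<Suc n])
       = distr (distr IT.PF.lim (PiM {0..<Suc n} M) (\<lambda>x. restrict x {0..<Suc n})) (count_space UNIV) (\<lambda>\<omega>. map \<omega> [0..<Suc n])"
      by (subst distr_distr[OF gm rL]) (auto simp: comp_def intro!: distr_cong)
    also have "\<dots> = distr (IT.CI {0..<Suc n}) (count_space UNIV) (\<lambda>\<omega>. map \<omega> [0..<Suc n])"
      by (subst IT.distr_lim) auto
    also have "\<dots> = distr (distr (IT.C 0 (Suc n) u) (PiM {0..<Suc n} M) (\<lambda>x. restrict x {0..<Suc n})) (count_space UNIV) (\<lambda>\<omega>. map \<omega> [0..<Suc n])"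
      by (simp only: IT.CI_def up u_def)
    also have "\<dots> = distr (IT.C 0 (Suc n) u) (count_space UNIV) (\<lambda>\<omega>. map \<omega> [0..<Suc n])"
      by (subst distr_distr[OF gm rC]) (auto simp: comp_def intro!: distr_cong)
    finally show ?thesis using C_eq by simp
  qed
  have "prob_space IT.PF.lim"
  proof (rule prob_spaceI)
    have "emeasure IT.PF.lim (space IT.PF.lim) = emeasure (distr IT.PF.lim (count_space UNIV) (\<lambda>\<omega>. map \<omega> [0..<Suc 0])) UNIV"
      by (subst emeasure_distr[OF gL]) auto
    also have "\<dots> = 1" unfolding L_eq by (simp add: measure_pmf.emeasure_space_1[simplified])
    finally show "emeasure IT.PF.lim (space IT.PF.lim) = 1" .
  qed
  then show ?thesis using L_eq sL unfolding M_def by blast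
qed


lemma chain_inv:
  assumes "G e" and "\<And>n j s. G j \<Longrightarrow> s \<in> set_pmf (K n j) \<Longrightarrow> G s"
  shows "l \<in> set_pmf (cpathN K e n) \<Longrightarrow> l \<noteq> [] \<and> G (last l)"
proof (induction n arbitrary: l)
  case 0 then show ?case using assms(1) by simp
next
  case (Suc n)
  then obtain l0 s where "l0 \<in> set_pmf (cpathN K e n)" "s \<in> set_pmf (K (Suc n) (last l0))" "l = l0 @ [s]"
    by auto
  with Suc.IH assms(2) show ?case by auto
qed

lemma chain_marg:
  assumes inv: "\<And>n l. l \<in> set_pmf (cpathN K e n) \<Longrightarrow> l \<noteq> [] \<and> G (last l)"
    and hK: "\<And>n j. G j \<Longrightarrow> map_pmf pr (K n j) = step t (i n) (x n) (pr j)"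
    and e: "pr e = N0"
  shows "map_pmf (map pr) (cpathN K e n) = path_pmf t i x N0 n"
proof (induction n)
  case 0 then show ?case using e by simp
next
  case (Suc n)
  have "map_pmf (map pr) (cpathN K e (Suc n))
     = bind_pmf (cpathN K e n) (\<lambda>l. map_pmf (\<lambda>N. map pr l @ [N]) (map_pmf pr (K (Suc n) (last l))))"
    by (simp add: map_bind_pmf map_pmf_comp)
  also have "\<dots> = bind_pmf (cpathN K e n) (\<lambda>l. map_pmf (\<lambda>N. map pr l @ [N])
       (step t (i (Suc n)) (x (Suc n)) (last (map pr l))))"
  proof (rule bind_pmf_cong[OF refl])
    fix l assume "l \<in> set_pmf (cpathN K e n)"
    with inv have "l \<noteq> []" "G (last l)" by auto
    then show "map_pmf (\<lambda>N. map pr l @ [N]) (map_pmf pr (K (Suc n) (last l))) =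
      map_pmf (\<lambda>N. map pr l @ [N]) (step t (i (Suc n)) (x (Suc n)) (last (map pr l)))"
      by (simp add: hK last_map)
  qed
  also have "\<dots> = bind_pmf (map_pmf (map pr) (cpathN K e n)) (\<lambda>L. map_pmf (\<lambda>N. L @ [N])
       (step t (i (Suc n)) (x (Suc n)) (last L)))"
    by (simp add: bind_map_pmf)
  also have "\<dots> = path_pmf t i x N0 (Suc n)"
    by (simp add: Suc.IH)
  finally show ?case .
qed



lemma mass_single: "mass N {y} = count N y"
  unfolding mass_def by (simp add: filter_eq_replicate_mset)

lemma abs_le_iff:
  fixes p q :: "'b::metric_space multiset"
  shows "abs_le p q \<longleftrightarrow> p \<subseteq># q"
proof
  assume a: "abs_le p q"
  show "p \<subseteq># q"
  proof (rule mset_subset_eqI)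
    fix y
    have "{y} \<in> sets (borel :: 'b measure)" by (rule borel_closed) simp
    then have "mass p {y} \<le> mass q {y}" using a by (auto simp: abs_le_def)
    then show "count p y \<le> count q y" by (simp add: mass_single)
  qed
next
  assume "p \<subseteq># q" then show "abs_le p q" by (auto simp: abs_le_def mass_mono)
qed


lemma cand_mono: "p \<subseteq># q \<Longrightarrow> cand_ball x p \<subseteq> cand_ball x q"
  unfolding cand_ball_def by (auto dest: mset_subset_eqD)

lemma policy_plain:
  fixes F :: "'b::metric_space \<Rightarrow> 'b multiset \<Rightarrow> 'b set"
  assumes i: "\<And>x N. F x N \<subseteq> cand_ball x N"
    and ii: "\<And>x p q. p \<subseteq># q \<Longrightarrow> F x p \<subseteq> F x q"
    and iii: "\<And>x p q y. p \<subseteq># q \<Longrightarrow> y \<in> F x q \<Longrightarrow> y \<in># p \<Longrightarrow> y \<in> F x p"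
  shows "(\<forall>x N. F x N \<subseteq> cand_ball x N) \<and>
    (\<forall>x p q y. p \<subseteq># q \<longrightarrow> y \<in> F x q \<longrightarrow> y \<in># p \<longrightarrow> y \<in> F x p) \<and>
    (\<forall>x p q y. p \<subseteq># q \<longrightarrow> \<not> F x p \<subseteq> F x q \<longrightarrow> y \<in> F x q \<longrightarrow> y \<notin># p)"
  using assms by blast

lemma policy_closest:
  fixes F :: "'b::metric_space \<Rightarrow> 'b multiset \<Rightarrow> 'b set"
  assumes i: "\<And>x N. F x N \<subseteq> cand_ball x N"
    and ii: "\<And>x p q. p \<subseteq># q \<Longrightarrow> F x p \<subseteq> F x q"
    and iii: "\<And>x p q y. p \<subseteq># q \<Longrightarrow> y \<in> F x q \<Longrightarrow> y \<in># p \<Longrightarrow> y \<in> F x p"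
  shows "(\<forall>x N. closest x (F x N) \<subseteq> cand_ball x N) \<and>
    (\<forall>x p q y. p \<subseteq># q \<longrightarrow> y \<in> closest x (F x q) \<longrightarrow> y \<in># p \<longrightarrow> y \<in> closest x (F x p)) \<and>
    (\<forall>x p q y. p \<subseteq># q \<longrightarrow> \<not> closest x (F x p) \<subseteq> closest x (F x q) \<longrightarrow> y \<in> closest x (F x q) \<longrightarrow> y \<notin># p)"
proof (intro conjI allI impI)
  fix x N show "closest x (F x N) \<subseteq> cand_ball x N" using i[of x N] by (auto simp: closest_def)
next
  fix x p q y assume pq: "p \<subseteq># q" and y: "y \<in> closest x (F x q)" and yp: "y \<in># p"
  then have "y \<in> F x p" using iii by (auto simp: closest_def)
  then show "y \<in> closest x (F x p)" using y ii[OF pq, of x] by (auto simp: closest_def)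
next
  fix x p q y assume pq: "p \<subseteq># q" and ns: "\<not> closest x (F x p) \<subseteq> closest x (F x q)"
    and y: "y \<in> closest x (F x q)"
  show "y \<notin># p"
  proof
    assume yp: "y \<in># p"
    from ns obtain z where z: "z \<in> closest x (F x p)" "z \<notin> closest x (F x q)" by blast
    then have zq: "z \<in> F x q" using ii[OF pq, of x] by (auto simp: closest_def)
    with z obtain w where w: "w \<in> F x q" "dist x w < dist x z" by (auto simp: closest_def not_le)
    have "dist x y \<le> dist x w" using y w by (auto simp: closest_def)
    moreover have "y \<in> F x p" using iii[OF pq _ yp] y by (auto simp: closest_def)
    then have "dist x z \<le> dist x y" using z by (auto simp: closest_def)
    ultimately show False using w by simp
  qed
qed


theorem generic:
  fixes cs :: "'b::metric_space \<Rightarrow> 'b multiset \<Rightarrow> 'b set" and i :: "nat \<Rightarrow> sgn" and x :: "nat \<Rightarrow> 'b"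
  assumes Q1: "\<And>x N. cs x N \<subseteq> cand_ball x N"
    and Q2: "\<And>x p q y. p \<subseteq># q \<Longrightarrow> y \<in> cs x q \<Longrightarrow> y \<in># p \<Longrightarrow> y \<in> cs x p"
    and Q3: "\<And>x p q y. p \<subseteq># q \<Longrightarrow> \<not> cs x p \<subseteq> cs x q \<Longrightarrow> y \<in> cs x q \<Longrightarrow> y \<notin># p"
    and PQ: "P0 \<subseteq># Q0"
  shows "coupling_exists (\<lambda>x N. choose_unif (cs x N)) i x P0 Q0"
proof -
  define Pts where "Pts = set_mset P0 \<union> set_mset Q0 \<union> range x"
  define S where "S = {(p, q). set_mset p \<subseteq> Pts \<and> set_mset q \<subseteq> Pts}"
  have cPts: "countable Pts" unfolding Pts_def by (auto intro: countable_finite)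
  have cS: "countable S"
  proof -
    have "S \<subseteq> (\<lambda>(a, b). (mset a, mset b)) ` (lists Pts \<times> lists Pts)"
    proof
      fix s assume "s \<in> S"
      then obtain p q where s: "s = (p, q)" "set_mset p \<subseteq> Pts" "set_mset q \<subseteq> Pts" by (auto simp: S_def)
      obtain a where a: "mset a = p" using ex_mset by blast
      obtain b where b: "mset b = q" using ex_mset by blast
      have "(a, b) \<in> lists Pts \<times> lists Pts" using s a b by auto
      then show "s \<in> (\<lambda>(a, b). (mset a, mset b)) ` (lists Pts \<times> lists Pts)"
        using s a b by (auto intro!: image_eqI[of _ _ "(a, b)"])
    qed
    then show ?thesis by (rule countable_subset) (intro countable_image countable_SIGMA countable_lists cPts)
  qed
  have S0: "(P0, Q0) \<in> S" unfolding S_def Pts_def by auto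
  define enc where "enc = to_nat_on S"
  define dec where "dec = from_nat_into S"
  have decS: "dec j \<in> S" for j using S0 from_nat_into[of S j] unfolding dec_def by auto
  have decenc: "dec (enc s) = s" if "s \<in> S" for s unfolding dec_def enc_def using cS that by simp
  define t where "t = (\<lambda>x N. choose_unif (cs x N))"
  define K where "K = (\<lambda>n j. map_pmf enc (cstep cs (i n) (x n) (dec j)))"
  define e where "e = enc (P0, Q0)"
  define G where "G = (\<lambda>j. fst (dec j) \<subseteq># snd (dec j))"
  have supp: "s \<in> S \<and> fst s \<subseteq># snd s"
    if s: "s \<in> set_pmf (cstep cs (i n) (x n) (dec j))" and g: "G j" for s n j
  proof -
    obtain p q where pq: "dec j = (p, q)" by (cases "dec j")
    obtain p' q' where s': "s = (p', q')" by (cases s)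
    have sub: "p \<subseteq># q" using g pq by (simp add: G_def)
    have c: "p' \<subseteq># q' \<and> set_mset p' \<subseteq> insert (x n) (set_mset p) \<and> set_mset q' \<subseteq> insert (x n) (set_mset q)"
    proof -
      have "(p', q') \<in> set_pmf (cstep cs (i n) (x n) (p, q))" using s s' pq by simp
      from cstep_supp[OF Q1 Q2 Q3 sub this] show ?thesis .
    qed
    have "set_mset p \<subseteq> Pts" "set_mset q \<subseteq> Pts" using decS[of j] pq by (auto simp: S_def)
    moreover have "x n \<in> Pts" by (simp add: Pts_def)
    ultimately show ?thesis using c s' by (auto simp: S_def)
  qed
  have Ge: "G e" using decenc[OF S0] PQ by (simp add: G_def e_def)
  have inv: "l \<noteq> [] \<and> G (last l)" if "l \<in> set_pmf (cpathN K e n)" for l n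
  proof (rule chain_inv[where G=G, OF Ge _ that])
    fix n j s assume g: "G j" and s: "s \<in> set_pmf (K n j)"
    then obtain s' where s': "s' \<in> set_pmf (cstep cs (i n) (x n) (dec j))" "s = enc s'"
      by (auto simp: K_def)
    with supp[OF s'(1) g] decenc show "G s" by (simp add: G_def)
  qed
  have hK: "map_pmf (pr \<circ> dec) (K n j) = step t (i n) (x n) (pr (dec j))"
    if g: "G j" and pr: "map_pmf pr (cstep cs (i n) (x n) (dec j)) = step t (i n) (x n) (pr (dec j))"
    for n j and pr :: "'b multiset \<times> 'b multiset \<Rightarrow> 'b multiset"
  proof -
    have "map_pmf (pr \<circ> dec) (K n j) = map_pmf (\<lambda>s. pr (dec (enc s))) (cstep cs (i n) (x n) (dec j))"
      by (simp add: K_def map_pmf_comp)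
    also have "\<dots> = map_pmf pr (cstep cs (i n) (x n) (dec j))"
      by (rule map_pmf_cong[OF refl]) (use supp[OF _ g] decenc in auto)
    finally show ?thesis using pr by simp
  qed
  have margF: "map_pmf (map (fst \<circ> dec)) (cpathN K e n) = path_pmf t i x P0 n" for n
  proof (rule chain_marg[where G=G, OF inv])
    fix n j assume g: "G j"
    obtain p q where pq: "dec j = (p, q)" by (cases "dec j")
    have "p \<subseteq># q" using g pq by (simp add: G_def)
    then have "map_pmf fst (cstep cs (i n) (x n) (dec j)) = step t (i n) (x n) (fst (dec j))"
      using cstep_fst[OF Q1] pq by (simp add: t_def)
    then show "map_pmf (fst \<circ> dec) (K n j) = step t (i n) (x n) ((fst \<circ> dec) j)"
      using hK[OF g] by simp
  next
    show "(fst \<circ> dec) e = P0" using decenc[OF S0] by (simp add: e_def)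
  qed
  have margS: "map_pmf (map (snd \<circ> dec)) (cpathN K e n) = path_pmf t i x Q0 n" for n
  proof (rule chain_marg[where G=G, OF inv])
    fix n j assume g: "G j"
    obtain p q where pq: "dec j = (p, q)" by (cases "dec j")
    have "p \<subseteq># q" using g pq by (simp add: G_def)
    then have "map_pmf snd (cstep cs (i n) (x n) (dec j)) = step t (i n) (x n) (snd (dec j))"
      using cstep_snd[OF Q1] pq by (simp add: t_def)
    then show "map_pmf (snd \<circ> dec) (K n j) = step t (i n) (x n) ((snd \<circ> dec) j)"
      using hK[OF g] by simp
  next
    show "(snd \<circ> dec) e = Q0" using decenc[OF S0] by (simp add: e_def)
  qed
  obtain L :: "(nat \<Rightarrow> nat) measure" where L: "prob_space L" "sets L = sets (PiM UNIV (\<lambda>_. count_space UNIV))"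
    and Ld: "\<And>n. distr L (count_space UNIV) (\<lambda>\<omega>. map \<omega> [0..<Suc n]) = measure_pmf (cpathN K e n)"
    using IT_chain[of K e] by blast
  interpret L: prob_space L by (rule L(1))
  have gL: "(\<lambda>\<omega>. map \<omega> [0..<m]) \<in> measurable L (count_space UNIV)" for m
    unfolding measurable_cong_sets[OF L(2) refl] by (rule g_meas) simp
  have cL: "(\<lambda>\<omega>. \<omega> k) \<in> measurable L (count_space UNIV)" for k
    unfolding measurable_cong_sets[OF L(2) refl] by (rule measurable_component_singleton) simp
  define PM :: "(nat \<Rightarrow> 'b multiset \<times> 'b multiset) measure" where "PM = PiM UNIV (\<lambda>_. count_space UNIV)"
  define Phi where "Phi = (\<lambda>(\<omega>::nat\<Rightarrow>nat) k. dec (\<omega> k))"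
  have Phim: "Phi \<in> measurable L PM"
    unfolding PM_def Phi_def
  proof (rule measurable_PiM_single')
    fix k :: nat
    show "(\<lambda>\<omega>. dec (\<omega> k)) \<in> measurable L (count_space UNIV)"
      by (rule measurable_compose[OF cL]) simp
  qed (auto simp: PiE_def)
  define M where "M = distr L PM Phi"
  have pM: "prob_space M" unfolding M_def by (rule L.prob_space_distr[OF Phim])
  have sM: "sets M = sets PM" by (simp add: M_def)
  have spM: "space M = UNIV" by (simp add: M_def PM_def space_PiM PiE_def extensional_def)
  have coord: "{\<omega> \<in> space PM. \<omega> k \<in> A} \<in> sets PM" for k A
  proof -
    have "(\<lambda>\<omega>. \<omega> k) \<in> measurable PM (count_space UNIV)"
      unfolding PM_def by (rule measurable_component_singleton) simp
    from measurable_sets[OF this, of A] show ?thesis by (simp add: vimage_def Int_def conj_commute)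
  qed
  have ev: "{\<omega> \<in> space M. map (\<lambda>k. pr (\<omega> k)) [0..<Suc n] = l} \<in> sets M \<and>
      measure M {\<omega> \<in> space M. map (\<lambda>k. pr (\<omega> k)) [0..<Suc n] = l} = pmf (path_pmf t i x N0 n) l"
    if mg: "\<And>n. map_pmf (map (pr \<circ> dec)) (cpathN K e n) = path_pmf t i x N0 n"
    for pr :: "'b multiset \<times> 'b multiset \<Rightarrow> 'b multiset" and N0 n l
  proof -
    let ?E = "{\<omega> \<in> space M. map (\<lambda>k. pr (\<omega> k)) [0..<Suc n] = l}"
    have EPM: "{\<omega> \<in> space PM. map (\<lambda>k. pr (\<omega> k)) [0..<Suc n] = l} \<in> sets PM"
    proof (rule cyl_sets)
      fix k c show "{\<omega> \<in> space PM. pr (\<omega> k) = c} \<in> sets PM"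
        using coord[of k "{s. pr s = c}"] by simp
    qed
    have EM: "?E \<in> sets M" using EPM sM by (simp add: M_def)
    have "measure M ?E = measure L (Phi -` ?E \<inter> space L)"
      unfolding M_def using EPM by (simp add: measure_distr[OF Phim])
    also have "Phi -` ?E \<inter> space L = (\<lambda>\<omega>. map \<omega> [0..<Suc n]) -` {l'. map (pr \<circ> dec) l' = l} \<inter> space L"
      by (auto simp: Phi_def spM)
    also have "measure L \<dots> = measure (distr L (count_space UNIV) (\<lambda>\<omega>. map \<omega> [0..<Suc n])) {l'. map (pr \<circ> dec) l' = l}"
      by (rule measure_distr[OF gL, symmetric]) simp
    also have "\<dots> = pmf (map_pmf (map (pr \<circ> dec)) (cpathN K e n)) l"
      unfolding Ld by (simp add: pmf_map vimage_def)
    finally show ?thesis using EM mg by simp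
  qed
  have AE: "AE \<omega> in M. \<forall>n. abs_le (fst (\<omega> n)) (snd (\<omega> n))"
  proof (subst AE_all_countable, intro allI)
    fix n
    have "AE l in measure_pmf (cpathN K e n). G (last l)"
      using inv by (auto simp: AE_measure_pmf_iff)
    then have "AE x in distr L (count_space UNIV) (\<lambda>\<omega>. map \<omega> [0..<Suc n]). G (last x)"
      unfolding Ld .
    then have "AE \<omega> in L. G (last (map \<omega> [0..<Suc n]))"
      by (subst (asm) AE_distr_iff[OF gL]) simp_all
    then have "AE \<omega> in L. abs_le (fst (Phi \<omega> n)) (snd (Phi \<omega> n))"
      by eventually_elim (simp add: G_def Phi_def abs_le_iff)
    moreover have "{\<omega> \<in> space PM. abs_le (fst (\<omega> n)) (snd (\<omega> n))} \<in> sets PM"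
      using coord[of n "{s. abs_le (fst s) (snd s)}"] by simp
    ultimately show "AE \<omega> in M. abs_le (fst (\<omega> n)) (snd (\<omega> n))"
      unfolding M_def by (simp add: AE_distr_iff[OF Phim])
  qed
  show ?thesis
    unfolding coupling_exists_def
    using pM ev[OF margF] ev[OF margS] AE by (auto simp: t_def)
qed



lemma generic_closest:
  fixes F :: "'b::metric_space \<Rightarrow> 'b multiset \<Rightarrow> 'b set"
  assumes i: "\<And>x N. F x N \<subseteq> cand_ball x N"
    and ii: "\<And>x p q. p \<subseteq># q \<Longrightarrow> F x p \<subseteq> F x q"
    and iii: "\<And>x p q y. p \<subseteq># q \<Longrightarrow> y \<in> F x q \<Longrightarrow> y \<in># p \<Longrightarrow> y \<in> F x p"
    and PQ: "P0 \<subseteq># Q0"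
  shows "coupling_exists (\<lambda>x N. choose_unif (closest x (F x N))) I X P0 Q0"
proof -
  note pc = policy_closest[OF i ii iii]
  have q1: "\<And>x N. closest x (F x N) \<subseteq> cand_ball x N" using pc by simp
  have q2: "\<And>x p q y. p \<subseteq># q \<Longrightarrow> y \<in> closest x (F x q) \<Longrightarrow> y \<in># p \<Longrightarrow> y \<in> closest x (F x p)"
    using pc by simp
  have q3: "\<And>x p q y. p \<subseteq># q \<Longrightarrow> \<not> closest x (F x p) \<subseteq> closest x (F x q) \<Longrightarrow> y \<in> closest x (F x q) \<Longrightarrow> y \<notin># p"
    using pc by simp
  show ?thesis by (rule generic[OF q1 q2 q3 PQ])
qed

lemma generic_plain:
  fixes F :: "'b::metric_space \<Rightarrow> 'b multiset \<Rightarrow> 'b set"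
  assumes i: "\<And>x N. F x N \<subseteq> cand_ball x N"
    and ii: "\<And>x p q. p \<subseteq># q \<Longrightarrow> F x p \<subseteq> F x q"
    and iii: "\<And>x p q y. p \<subseteq># q \<Longrightarrow> y \<in> F x q \<Longrightarrow> y \<in># p \<Longrightarrow> y \<in> F x p"
    and PQ: "P0 \<subseteq># Q0"
  shows "coupling_exists (\<lambda>x N. choose_unif (F x N)) I X P0 Q0"
proof -
  have q3: "\<And>x p q y. p \<subseteq># q \<Longrightarrow> \<not> F x p \<subseteq> F x q \<Longrightarrow> y \<in> F x q \<Longrightarrow> y \<notin># p"
    using ii by blast
  show ?thesis by (rule generic[OF i iii q3 PQ])
qed

lemma cand_in: "p \<subseteq># q \<Longrightarrow> y \<in> cand_ball x q \<Longrightarrow> y \<in># p \<Longrightarrow> y \<in> cand_ball x p"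
  unfolding cand_ball_def by auto

theorem mainTheorem2:
  fixes H :: "'a::metric_space set" and P0 Q0 :: "'a multiset"
    and i :: "nat \<Rightarrow> sgn" and x :: "nat \<Rightarrow> 'a"
    and H' :: "(real^'d) set" and P0' Q0' :: "(real^'d) multiset"
    and x' :: "nat \<Rightarrow> real^'d"
  shows
   "(compact H \<and> set_mset P0 \<subseteq> H \<and> set_mset Q0 \<subseteq> H \<and> (\<forall>n. x n \<in> H) \<and> abs_le P0 Q0
       \<longrightarrow> coupling_exists kill_LG i x P0 Q0 \<and> coupling_exists kill_LR i x P0 Q0)
    \<and> (compact H' \<and> set_mset P0' \<subseteq> H' \<and> set_mset Q0' \<subseteq> H' \<and> (\<forall>n. x' n \<in> H') \<and> abs_le P0' Q0'
       \<longrightarrow> coupling_exists kill_LO i x' P0' Q0')"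
proof (intro conjI impI)
  assume "compact H \<and> set_mset P0 \<subseteq> H \<and> set_mset Q0 \<subseteq> H \<and> (\<forall>n. x n \<in> H) \<and> abs_le P0 Q0"
  then have PQ: "P0 \<subseteq># Q0" by (simp add: abs_le_iff)
  have "coupling_exists (\<lambda>x N. choose_unif (closest x (cand_ball x N))) i x P0 Q0"
    by (rule generic_closest[OF subset_refl cand_mono cand_in PQ])
  moreover have "kill_LG = (\<lambda>(x::'a) N. choose_unif (closest x (cand_ball x N)))"
    by (simp add: kill_LG_def[abs_def])
  ultimately show "coupling_exists kill_LG i x P0 Q0" by simp
  have "coupling_exists (\<lambda>x N. choose_unif (cand_ball x N)) i x P0 Q0"
    by (rule generic_plain[OF subset_refl cand_mono cand_in PQ])
  moreover have "kill_LR = (\<lambda>(x::'a) N. choose_unif (cand_ball x N))"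
    by (simp add: kill_LR_def[abs_def])
  ultimately show "coupling_exists kill_LR i x P0 Q0" by simp
next
  assume "compact H' \<and> set_mset P0' \<subseteq> H' \<and> set_mset Q0' \<subseteq> H' \<and> (\<forall>n. x' n \<in> H') \<and> abs_le P0' Q0'"
  then have PQ: "P0' \<subseteq># Q0'" by (simp add: abs_le_iff)
  define F :: "real^'d \<Rightarrow> (real^'d) multiset \<Rightarrow> (real^'d) set"
    where "F = (\<lambda>x N. {y \<in> cand_ball x N. \<forall>k. x $ k \<le> y $ k})"
  have f1: "F x N \<subseteq> cand_ball x N" for x N unfolding F_def by blast
  have f2: "p \<subseteq># q \<Longrightarrow> F x p \<subseteq> F x q" for x p q using cand_mono[of p q x] unfolding F_def by blast
  have f3: "p \<subseteq># q \<Longrightarrow> y \<in> F x q \<Longrightarrow> y \<in># p \<Longrightarrow> y \<in> F x p" for x p q y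
    using cand_in[of p q y x] unfolding F_def by blast
  have "coupling_exists (\<lambda>x N. choose_unif (closest x (F x N))) i x' P0' Q0'"
    by (rule generic_closest[OF f1 f2 f3 PQ])
  moreover have "kill_LO = (\<lambda>x N. choose_unif (closest x (F x N)))"
    by (simp add: kill_LO_def[abs_def] F_def)
  ultimately show "coupling_exists kill_LO i x' P0' Q0'" by simp
qed

end
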